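(* Let $p$ be an odd prime, let $x, y \in \mathbb{Z}$ satisfy $x^2 - 2 = y^p$ with $y \neq -1$, and let $a, b \in \mathbb{Z}$ satisfy $x + \sqrt{2} = (1+\sqrt{2})(a+b\sqrt{2})^p$. Then: (1) $v_p(a-1) = v_p(b)$; (2) if $p \mid b$ then $v_p(x-1) = v_p(b) + 1$, and otherwise $p \nmid (x-1)$; in particular either $p \nmid (x-1)$ or $p^2 \mid (x-1)$; (3) if $p \mid a$ then $v_p(x-2) = v_p(a) + 1$, and otherwise $p \nmid (x-2)$; in particular either $p \nmid (x-2)$ or $p^2 \mid (x-2)$.
   Context: $v_p$ denotes the $p$-adic valuation. *)

theory Defs
  imports Complex_Main "HOL-Computational_Algebra.Primes"
begin

end

theory Submission
  imports Defs "HOL-Number_Theory.Residues"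
begin

lemma no_sqrt2_int:
  fixes n k :: int assumes "k \<noteq> 0" shows "n^2 \<noteq> 2 * k^2"
proof
  assume h: "n^2 = 2 * k^2"
  then have n0: "n \<noteq> 0" using assms by auto
  have p2: "prime (2::int)" by simp
  have "multiplicity 2 (n^2) = 2 * multiplicity 2 n"
    using n0 p2 by (simp add: prime_elem_multiplicity_power_distrib)
  moreover have "multiplicity 2 (2 * k^2) = Suc (2 * multiplicity (2::int) k)"
    using assms p2 by (simp add: prime_elem_multiplicity_mult_distrib prime_elem_multiplicity_power_distrib)
  ultimately have "2 * multiplicity 2 n = Suc (2 * multiplicity (2::int) k)" using h by simp
  then show False by presburger
qed

definition Z2 :: "real set" where "Z2 = {r. \<exists>u v::int. r = of_int u + of_int v * sqrt 2}"

lemma Z2_coeff: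
  assumes "of_int u + of_int v * sqrt 2 = of_int u' + of_int v' * sqrt 2"
  shows "u = u' \<and> v = v'"
proof (cases "v = v'")
  case True then show ?thesis using assms by simp
next
  case False
  have "of_int (u - u') = of_int (v' - v) * sqrt 2" using assms by (simp add: algebra_simps)
  then have "(of_int (u - u'))^2 = (of_int (v' - v))^2 * (2::real)"
    by (simp add: power_mult_distrib)
  then have "real_of_int ((u - u')^2) = real_of_int (2 * (v' - v)^2)" by simp
  then have "(u - u')^2 = 2 * (v' - v)^2" by (simp only: of_int_eq_iff)
  with no_sqrt2_int[of "v' - v" "u - u'"] False show ?thesis by simp
qed

lemma Z2_coeff':
  assumes "A = of_int u + of_int v * s" "A = of_int u' + of_int v' * s" "s = sqrt 2"
  shows "u = u' \<and> v = v'"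
  using Z2_coeff[of u v u' v'] assms by simp

lemma Z2_int[simp]: "of_int u \<in> Z2" unfolding Z2_def by (rule CollectI, rule exI[of _ u], rule exI[of _ "0::int"]) simp
lemma Z2_nat[simp]: "of_nat u \<in> Z2" using Z2_int[of "int u"] by simp
lemma Z2_sqrt[simp]: "sqrt 2 \<in> Z2" unfolding Z2_def by (rule CollectI, rule exI[of _ "0::int"], rule exI[of _ "1::int"]) simp
lemma Z2_add[simp]: "x \<in> Z2 \<Longrightarrow> y \<in> Z2 \<Longrightarrow> x + y \<in> Z2"
  unfolding Z2_def apply clarify
  subgoal for a1 b1 a2 b2 by (rule exI[of _ "a1+b1"], rule exI[of _ "a2+b2"]) (simp add: algebra_simps)
  done
lemma Z2_mult[simp]: "x \<in> Z2 \<Longrightarrow> y \<in> Z2 \<Longrightarrow> x * y \<in> Z2"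
  unfolding Z2_def apply clarify
  subgoal for a1 b1 a2 b2 by (rule exI[of _ "a1*b1+2*a2*b2"], rule exI[of _ "a1*b2+a2*b1"]) (simp add: algebra_simps)
  done
lemma Z2_pow[simp]: "x \<in> Z2 \<Longrightarrow> x ^ n \<in> Z2"
  by (induction n) (auto simp: Z2_int[of 1, simplified])
lemma Z2_sum: "(\<And>i. i \<in> A \<Longrightarrow> f i \<in> Z2) \<Longrightarrow> sum f A \<in> Z2"
  by (induction A rule: infinite_finite_induct) (auto simp: Z2_int[of 0, simplified])
lemma Z2E: "x \<in> Z2 \<Longrightarrow> (\<And>u v. x = of_int u + of_int v * sqrt 2 \<Longrightarrow> P) \<Longrightarrow> P"
  unfolding Z2_def by blast

lemma fermat_int:
  fixes a :: int assumes "prime p" shows "[a ^ p = a] (mod int p)"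
proof -
  define r where "r = nat (a mod int p)"
  have p0: "p > 0" using assms prime_gt_0_nat by blast
  have ir: "int r = a mod int p" using p0 by (simp add: r_def)
  have ar: "[a = int r] (mod int p)" by (simp add: ir cong_def)
  have rr: "[r ^ p = r] (mod p)"
  proof (cases "p dvd r")
    case True
    then have "[r = 0] (mod p)" by (simp add: cong_0_iff)
    then have r0: "[r = 0] (mod p)" .
    then have "[r ^ p = 0 ^ p] (mod p)" by (rule cong_pow)
    moreover have "(0::nat) ^ p = 0" using p0 by simp
    ultimately have "[r ^ p = 0] (mod p)" by simp
    then show ?thesis using r0 by (meson cong_sym cong_trans)
  next
    case False
    then have "[r ^ (p - 1) = 1] (mod p)" using fermat_theorem assms by blast
    then have "[r * r ^ (p - 1) = r * 1] (mod p)" by (rule cong_scalar_left)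
    moreover have "r * r ^ (p - 1) = r ^ p" using p0 by (metis Suc_diff_1 power_Suc)
    ultimately show ?thesis by simp
  qed
  then have "[int (r ^ p) = int r] (mod int p)" using cong_int_iff by blast
  then have "[(int r) ^ p = int r] (mod int p)" by simp
  moreover have "[a ^ p = (int r) ^ p] (mod int p)" using ar by (rule cong_pow)
  ultimately show ?thesis using ar by (meson cong_sym cong_trans)
qed

lemma binom_split:
  fixes c e :: real and q m :: nat
  assumes q: "prime q" and c: "c \<in> Z2" and e: "e \<in> Z2"
  shows "\<exists>z\<in>Z2. (c + of_nat q ^ m * e) ^ q = c ^ q + of_nat q * c^(q-1) * (of_nat q ^ m * e)
           + (of_nat q ^ m * e) ^ q + of_nat q ^ (2*m+1) * z"
proof -
  define d where "d = of_nat q ^ m * e"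
  have q2: "q \<ge> 2" using q prime_ge_2_nat by blast
  then obtain n where n: "q = Suc (Suc n)" by (metis add_2_eq_Suc le_Suc_ex)
  define f where "f k = of_nat (q choose k) * c ^ k * d ^ (q - k)" for k
  define z where "z = (\<Sum>i<n. of_nat ((q choose Suc i) div q) * c ^ Suc i
        * of_nat q ^ (m * (q - Suc i) - 2 * m) * e ^ (q - Suc i))"
  have zZ: "z \<in> Z2" unfolding z_def using c e by (intro Z2_sum) simp
  have fterm: "f (Suc i) = of_nat q ^ (2*m+1) * (of_nat ((q choose Suc i) div q) * c ^ Suc i
        * of_nat q ^ (m * (q - Suc i) - 2 * m) * e ^ (q - Suc i))" if i: "i < n" for i
  proof -
    have dv: "q dvd (q choose Suc i)" using dvd_choose_prime[of "Suc i" q] q n i by simp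
    then have C: "of_nat (q choose Suc i) = (of_nat q :: real) * of_nat ((q choose Suc i) div q)"
      by (metis dvd_mult_div_cancel of_nat_mult)
    have "2 \<le> q - Suc i" using i n by auto
    then have ge: "m * (q - Suc i) \<ge> 2 * m" using mult_le_mono2[of 2 "q - Suc i" m] by (simp add: mult.commute)
    have P: "(of_nat q :: real) ^ (m * (q - Suc i)) = of_nat q ^ (2*m) * of_nat q ^ (m * (q - Suc i) - 2 * m)"
      using ge by (metis le_add_diff_inverse power_add)
    have "d ^ (q - Suc i) = of_nat q ^ (m * (q - Suc i)) * e ^ (q - Suc i)"
      unfolding d_def by (simp add: power_mult_distrib power_mult)
    then show ?thesis unfolding f_def C P by (simp add: algebra_simps power_add)
  qed
  have "(c + d) ^ q = (\<Sum>k\<le>q. f k)" unfolding f_def binomial_ring ..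
  also have "\<dots> = f 0 + (\<Sum>i<n. f (Suc i)) + f (Suc n) + f q"
    unfolding n by (simp add: sum.atMost_shift)
  also have "(\<Sum>i<n. f (Suc i)) = of_nat q ^ (2*m+1) * z"
    unfolding z_def sum_distrib_left by (rule sum.cong) (auto simp: fterm)
  also have "f 0 = d ^ q" unfolding f_def by simp
  also have "f q = c ^ q" unfolding f_def by simp
  also have "f (Suc n) = of_nat q * c^(q-1) * d" unfolding f_def n by simp
  finally show ?thesis using zZ unfolding d_def by (intro bexI[of _ z]) (simp_all add: algebra_simps)
qed

lemma int_pow_neg1: fixes y :: int assumes "y ^ p = -1" shows "y = -1"
proof -
  have "\<bar>y\<bar> ^ p = 1" using assms by (metis abs_neg_one power_abs)
  then have "\<bar>y\<bar> = 1 \<or> p = 0" using power_eq_imp_eq_base[of "\<bar>y\<bar>" p 1] by force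
  then show ?thesis using assms by (cases "p = 0") (auto simp: abs_if split: if_splits)
qed

lemma int_pow_ne2: fixes y :: int assumes "p \<ge> 2" shows "y ^ p \<noteq> 2"
proof
  assume h: "y ^ p = 2"
  show False
  proof (cases "\<bar>y\<bar> \<le> 1")
    case True
    then have "\<bar>y\<bar> ^ p \<le> 1" by (simp add: power_le_one)
    then show False using h by (metis power_abs abs_numeral numeral_le_one_iff semiring_norm(69))
  next
    case False
    then have "2 ^ p \<le> \<bar>y\<bar> ^ p" by (intro power_mono) auto
    moreover have "(2::int) ^ 2 \<le> 2 ^ p" using assms by (intro power_increasing) auto
    ultimately show False using h by (simp add: power_abs[symmetric])
  qed
qed

lemma lin_comb:
  fixes s :: real
  shows "of_int c0 + of_int q * (of_int c1 + of_int c2 * s) + of_int r * (of_int d1 + of_int d2 * s)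
     + of_int r * (of_int f1 + of_int f2 * s)
   = of_int (c0 + q * c1 + r * d1 + r * f1) + of_int (q * c2 + r * d2 + r * f2) * s"
  by (simp add: algebra_simps)

lemma lin_comb2:
  fixes s :: real
  shows "of_int c1 * s + of_int c0 + of_int r * (of_int d1)
     + of_int r * (of_int f1 + of_int f2 * s)
   = of_int (c0 + r * d1 + r * f1) + of_int (c1 + r * f2) * s"
  by (simp add: algebra_simps)

theorem theorem7p6:
  fixes p :: nat and x y a b :: int
  assumes "prime p" and "odd p"
    and "x ^ 2 - 2 = y ^ p" and "y \<noteq> -1"
    and "real_of_int x + sqrt 2 = (1 + sqrt 2) * (real_of_int a + real_of_int b * sqrt 2) ^ p"
  shows "multiplicity (int p) (a - 1) = multiplicity (int p) b
     \<and> (int p dvd b \<longrightarrow> multiplicity (int p) (x - 1) = multiplicity (int p) b + 1)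
     \<and> (\<not> int p dvd b \<longrightarrow> \<not> int p dvd (x - 1))
     \<and> (\<not> int p dvd (x - 1) \<or> (int p) ^ 2 dvd (x - 1))
     \<and> (int p dvd a \<longrightarrow> multiplicity (int p) (x - 2) = multiplicity (int p) a + 1)
     \<and> (\<not> int p dvd a \<longrightarrow> \<not> int p dvd (x - 2))
     \<and> (\<not> int p dvd (x - 2) \<or> (int p) ^ 2 dvd (x - 2))"
proof -
  note pr = assms(1)
  define s2 where "s2 = sqrt (2::real)"
  have s2sq: "s2 * s2 = 2" unfolding s2_def by simp
  have p2: "p \<ge> 2" using pr prime_ge_2_nat by blast
  have p3: "p \<ge> 3" using p2 assms(2) by presburger
  obtain h where ph: "p = 2 * h + 1" using assms(2) oddE by blast
  have pi: "prime (int p)" using pr by simp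
  have pnu: "\<not> is_unit (int p)" using pi not_prime_unit by blast
  have p0: "int p \<noteq> 0" using p2 by simp
  have s2pow: "s2 ^ p = 2 ^ h * s2" unfolding ph power_add power_mult
    by (simp add: power2_eq_square s2sq)
  have s2pow1: "s2 ^ (p - 1) = 2 ^ h" using ph
    by (simp add: power_mult power2_eq_square s2sq)
  have p2dvd: "\<not> int p dvd 2 ^ h"
  proof
    assume "int p dvd 2 ^ h"
    then have "int p dvd 2" using pi prime_dvd_power by blast
    then have "int p \<le> 2" using zdvd_imp_le[of "int p" 2] by simp
    then show False using p3 by simp
  qed
  define A where "A = real_of_int a + real_of_int b * s2"
  have AZ: "A \<in> Z2" unfolding A_def s2_def by simp
  obtain U V where UV: "A ^ p = of_int U + of_int V * s2"
    using Z2_pow[OF AZ, of p] unfolding s2_def by (auto elim: Z2E)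
  have "real_of_int x + of_int 1 * s2 = (1 + s2) * A ^ p"
    using assms(5) unfolding A_def s2_def by simp
  also have "\<dots> = (1 + s2) * (of_int U + of_int V * s2)" by (simp only: UV)
  also have "\<dots> = of_int U + of_int V * (s2 * s2) + of_int (U + V) * s2"
    by (simp add: algebra_simps)
  also have "\<dots> = of_int (U + 2 * V) + of_int (U + V) * s2" by (simp add: s2sq)
  finally have "real_of_int x + of_int 1 * s2 = of_int (U + 2 * V) + of_int (U + V) * s2" .
  then have "x = U + 2 * V \<and> 1 = U + V" unfolding s2_def by (rule Z2_coeff)
  then have xUV: "x = U + 2 * V" and UV1: "U + V = 1" by simp_all
  have xV: "x - 1 = V" using xUV UV1 by simp
  have xU: "x - 2 = - U" using xUV UV1 by simp
  obtain z where zZ: "z \<in> Z2" and z: "A ^ p = of_int a ^ p + of_nat p * of_int a ^ (p - 1) * (of_nat p ^ 0 * (of_int b * s2))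
        + (of_nat p ^ 0 * (of_int b * s2)) ^ p + of_nat p ^ (2 * 0 + 1) * z"
  proof -
    have Aeq: "A = of_int a + of_nat p ^ 0 * (of_int b * s2)" unfolding A_def by simp
    have bZ: "of_int b * s2 \<in> Z2" unfolding s2_def by simp
    obtain z where zz: "z \<in> Z2" and eq: "(of_int a + of_nat p ^ 0 * (of_int b * s2)) ^ p = of_int a ^ p + of_nat p * of_int a ^ (p - 1) * (of_nat p ^ 0 * (of_int b * s2))
        + (of_nat p ^ 0 * (of_int b * s2)) ^ p + of_nat p ^ (2 * 0 + 1) * z"
      using binom_split[OF pr Z2_int bZ, of a 0] by blast
    show ?thesis by (rule that[OF zz]) (unfold Aeq, rule eq)
  qed
  obtain u1 v1 where z1: "z = of_int u1 + of_int v1 * s2" using zZ unfolding s2_def by (auto elim: Z2E)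
  have "A ^ p = of_int (a ^ p + int p * u1) + of_int (int p * a ^ (p - 1) * b + b ^ p * 2 ^ h + int p * v1) * s2"
  proof -
    have e1: "(of_nat p ^ 0 * (of_int b * s2)) ^ p = of_int (b ^ p * 2 ^ h) * s2"
      by (simp add: power_mult_distrib s2pow)
    have e2: "of_nat p * of_int a ^ (p - 1) * (of_nat p ^ 0 * (of_int b * s2)) = of_int (int p * a ^ (p - 1) * b) * s2"
      by simp
    have "A ^ p = of_int (a ^ p) + of_int (int p * a ^ (p - 1) * b) * s2 + of_int (b ^ p * 2 ^ h) * s2
        + of_int (int p) * (of_int u1 + of_int v1 * s2)"
      using z unfolding e1 e2 z1 by simp
    then show ?thesis by (simp only: of_int_add distrib_left distrib_right of_int_mult mult.assoc add_ac)
  qed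
  then have "U = a ^ p + int p * u1 \<and> V = int p * a ^ (p - 1) * b + b ^ p * 2 ^ h + int p * v1"
    by (rule Z2_coeff'[OF UV _ s2_def])
  then have Umod: "U = a ^ p + int p * u1" and Vmod: "V = int p * a ^ (p - 1) * b + b ^ p * 2 ^ h + int p * v1"
    by simp_all
  have UmodD: "int p dvd U \<longleftrightarrow> int p dvd a"
  proof -
    have "int p dvd U \<longleftrightarrow> int p dvd a ^ p" unfolding Umod by (simp add: dvd_add_left_iff)
    also have "\<dots> \<longleftrightarrow> int p dvd a" using prime_dvd_power_iff[OF pi, of p a] p2 by simp
    finally show ?thesis .
  qed
  have VmodD: "int p dvd V \<longleftrightarrow> int p dvd b"
  proof -
    have "int p dvd V \<longleftrightarrow> int p dvd b ^ p * 2 ^ h" unfolding Vmod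
      by (simp add: dvd_add_left_iff dvd_add_right_iff mult.assoc)
    also have "\<dots> \<longleftrightarrow> int p dvd b" using prime_dvd_power_iff[OF pi, of p b] prime_dvd_mult_iff[OF pi, of "b ^ p" "2 ^ h"] p2 p2dvd by simp
    finally show ?thesis .
  qed
  have ferm: "int p dvd a ^ p - a" using fermat_int[OF pr, of a] by (simp add: cong_iff_dvd_diff)
  have sum1: "int p dvd (a ^ p - 1) + b ^ p * 2 ^ h"
  proof -
    have "(a ^ p - 1) + b ^ p * 2 ^ h = - int p * (u1 + a ^ (p - 1) * b + v1)"
      using UV1 Umod Vmod by (simp add: algebra_simps)
    then show ?thesis by simp
  qed
  have bA: "int p dvd b \<longleftrightarrow> int p dvd (a - 1)"
  proof
    assume "int p dvd b"
    moreover have "b dvd b ^ p" using p2 by (intro dvd_power) simp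
    ultimately have "int p dvd b ^ p" by (rule dvd_trans)
    then have "int p dvd b ^ p * 2 ^ h" by simp
    then have "int p dvd a ^ p - 1" using sum1 by (simp add: dvd_add_left_iff)
    then have "int p dvd (a ^ p - 1) - (a ^ p - a)" using ferm by (rule dvd_diff)
    then show "int p dvd (a - 1)" by simp
  next
    assume "int p dvd (a - 1)"
    then have "int p dvd (a ^ p - a) + (a - 1)" using ferm by (intro dvd_add)
    then have "int p dvd a ^ p - 1" by simp
    then have "int p dvd b ^ p * 2 ^ h" using sum1 by (simp add: dvd_add_right_iff)
    then show "int p dvd b" using prime_dvd_power_iff[OF pi, of p b] prime_dvd_mult_iff[OF pi, of "b ^ p" "2 ^ h"] p2 p2dvd by simp
  qed
  have b0: "b \<noteq> 0"
  proof
    assume "b = 0"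
    then have "A ^ p = of_int (a ^ p) + of_int 0 * s2" unfolding A_def by simp
    then have "U = a ^ p \<and> V = 0" by (rule Z2_coeff'[OF UV _ s2_def])
    then have "V = 0" by simp
    then have "x = 1" using xUV UV1 by simp
    then have "y ^ p = -1" using assms(3) by simp
    then show False using int_pow_neg1 assms(4) by blast
  qed
  have a0: "a \<noteq> 0"
  proof
    assume "a = 0"
    then have "A ^ p = of_int 0 + of_int (b ^ p * 2 ^ h) * s2" unfolding A_def
      by (simp add: power_mult_distrib s2pow)
    then have "U = 0 \<and> V = b ^ p * 2 ^ h" by (rule Z2_coeff'[OF UV _ s2_def])
    then have "U = 0" by simp
    then have "x = 2" using xUV UV1 by simp
    then have "y ^ p = 2" using assms(3) by simp
    then show False using int_pow_ne2 p2 by blast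
  qed
  have keyA: "int p ^ Suc m dvd (a - 1) + b \<and> int p ^ Suc m dvd V
      \<and> (int p ^ Suc (Suc m) dvd V \<longrightarrow> int p ^ Suc m dvd b)"
    if m1: "m \<ge> 1" and ds: "int p ^ m dvd a - 1" and dt: "int p ^ m dvd b" for m
  proof -
    obtain s' where s': "a - 1 = int p ^ m * s'" using ds by (elim dvdE)
    obtain t' where t': "b = int p ^ m * t'" using dt by (elim dvdE)
    define e where "e = real_of_int s' + of_int t' * s2"
    have eZ: "e \<in> Z2" unfolding e_def s2_def by simp
    have one: "(1::real) \<in> Z2" using Z2_int[of 1] by simp
    have pe: "of_nat p ^ m * e = of_int (a - 1) + of_int b * s2"
      unfolding e_def s' t' by (simp add: algebra_simps)
    have Ae: "A = 1 + of_nat p ^ m * e" unfolding pe A_def by simp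
    obtain z where zZ: "z \<in> Z2" and z: "(1 + of_nat p ^ m * e) ^ p = 1 ^ p + of_nat p * 1 ^ (p - 1) * (of_nat p ^ m * e)
        + (of_nat p ^ m * e) ^ p + of_nat p ^ (2 * m + 1) * z"
      using binom_split[OF pr one eZ, of m] by blast
    obtain z1 z2 where z12: "z = of_int z1 + of_int z2 * s2" using zZ unfolding s2_def by (auto elim: Z2E)
    obtain w1 w2 where w12: "e ^ p = of_int w1 + of_int w2 * s2" using Z2_pow[OF eZ, of p] unfolding s2_def by (auto elim: Z2E)
    define k where "k = m * p - (2 * m + 1)"
    have "m * p \<ge> m * 3" using p3 by simp
    then have "m * p \<ge> 2 * m + 1" using m1 by linarith
    then have mp: "m * p = (2 * m + 1) + k" unfolding k_def by simp
    have pw: "(of_nat p ^ m * e) ^ p = of_int (int p ^ (2 * m + 1)) * (of_int (int p ^ k * w1) + of_int (int p ^ k * w2) * s2)"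
    proof -
      have "(of_nat p ^ m * e) ^ p = (of_nat p :: real) ^ (m * p) * e ^ p" by (simp add: power_mult_distrib power_mult)
      also have "\<dots> = of_nat p ^ (2 * m + 1) * (of_nat p ^ k * e ^ p)" unfolding mp power_add by simp
      finally show ?thesis unfolding w12 by (simp add: algebra_simps)
    qed
    have "A ^ p = of_int 1 + of_int (int p) * (of_int (a - 1) + of_int b * s2)
        + of_int (int p ^ (2 * m + 1)) * (of_int (int p ^ k * w1) + of_int (int p ^ k * w2) * s2)
        + of_int (int p ^ (2 * m + 1)) * (of_int z1 + of_int z2 * s2)"
      unfolding Ae z pw z12 pe[symmetric] by simp
    also have "\<dots> = of_int (1 + int p * (a - 1) + int p ^ (2 * m + 1) * (int p ^ k * w1) + int p ^ (2 * m + 1) * z1)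
       + of_int (int p * b + int p ^ (2 * m + 1) * (int p ^ k * w2) + int p ^ (2 * m + 1) * z2) * s2"
      by (rule lin_comb)
    finally have "U = 1 + int p * (a - 1) + int p ^ (2 * m + 1) * (int p ^ k * w1) + int p ^ (2 * m + 1) * z1
      \<and> V = int p * b + int p ^ (2 * m + 1) * (int p ^ k * w2) + int p ^ (2 * m + 1) * z2"
      by (rule Z2_coeff'[OF UV _ s2_def])
    then have UA: "U = 1 + int p * (a - 1) + int p ^ (2 * m + 1) * (int p ^ k * w1 + z1)"
      and VA: "V = int p * b + int p ^ (2 * m + 1) * (int p ^ k * w2 + z2)"
      by (simp_all add: distrib_left)
    define W where "W = int p ^ k * w1 + z1 + (int p ^ k * w2 + z2)"
    have "int p * ((a - 1) + b) = int p * (- (int p ^ (2 * m) * W))"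
      using UV1 unfolding UA VA W_def by (simp add: algebra_simps power_add)
    then have sb: "(a - 1) + b = - (int p ^ (2 * m) * W)" using mult_left_cancel[OF p0] by blast
    have "int p ^ Suc m dvd int p ^ (2 * m)" using m1 by (intro le_imp_power_dvd) simp
    then have c1: "int p ^ Suc m dvd (a - 1) + b" unfolding sb by simp
    have d2: "int p ^ Suc (Suc m) dvd int p ^ (2 * m + 1)" using m1 by (intro le_imp_power_dvd) simp
    then have d1: "int p ^ Suc m dvd int p ^ (2 * m + 1)" by (meson dvd_trans le_imp_power_dvd le_Suc_eq)
    have h1: "int p ^ Suc m dvd int p * b" unfolding t' by simp
    have h2: "int p ^ Suc m dvd int p ^ (2 * m + 1) * (int p ^ k * w2 + z2)" using d1 by (rule dvd_mult2)
    have c2: "int p ^ Suc m dvd V" unfolding VA by (rule dvd_add[OF h1 h2])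
    have c3: "int p ^ Suc m dvd b" if "int p ^ Suc (Suc m) dvd V"
    proof -
      have "int p ^ Suc (Suc m) dvd V - int p ^ (2 * m + 1) * (int p ^ k * w2 + z2)"
        by (rule dvd_diff[OF that dvd_mult2[OF d2]])
      then have "int p * int p ^ Suc m dvd int p * b" unfolding VA by simp
      then show ?thesis using p0 by simp
    qed
    show ?thesis using c1 c2 c3 by blast
  qed
  have nmul: "\<not> int p ^ Suc (multiplicity (int p) c) dvd c" if "c \<noteq> 0" for c
    using multiplicity_geI[OF that pnu] by fastforce
  have partA: "multiplicity (int p) (a - 1) = multiplicity (int p) b
     \<and> (int p dvd b \<longrightarrow> multiplicity (int p) (x - 1) = multiplicity (int p) b + 1)
     \<and> (\<not> int p dvd b \<longrightarrow> \<not> int p dvd (x - 1))"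
  proof (cases "int p dvd b")
    case False
    then have "\<not> int p dvd (a - 1)" using bA by blast
    then show ?thesis using False VmodD xV by (simp add: not_dvd_imp_multiplicity_0)
  next
    case True
    have pa1: "int p dvd a - 1" using True bA by blast
    define M where "M = multiplicity (int p) b"
    have M1: "M \<ge> 1" unfolding M_def using multiplicity_geI[OF b0 pnu, of 1] True by simp
    have nb: "\<not> int p ^ Suc M dvd b" unfolding M_def using nmul b0 by blast
    have dbM: "int p ^ M dvd b" unfolding M_def by (rule multiplicity_dvd)
    have a10: "a - 1 \<noteq> 0"
    proof
      assume "a - 1 = 0"
      then have "int p ^ Suc M dvd b" using keyA[OF M1 _ dbM] by simp
      then show False using nb by blast
    qed
    define N where "N = multiplicity (int p) (a - 1)"
    have N1: "N \<ge> 1" unfolding N_def using multiplicity_geI[OF a10 pnu, of 1] pa1 by simp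
    have na: "\<not> int p ^ Suc N dvd a - 1" unfolding N_def using nmul a10 by blast
    have daN: "int p ^ N dvd a - 1" unfolding N_def by (rule multiplicity_dvd)
    have NM: "N = M"
    proof (rule ccontr)
      assume "N \<noteq> M"
      then consider "N < M" | "M < N" by linarith
      then show False
      proof cases
        case 1
        have "int p ^ N dvd b" unfolding M_def using 1 by (intro multiplicity_dvd') (simp add: M_def)
        then have h1: "int p ^ Suc N dvd (a - 1) + b" using keyA[OF N1 daN] by blast
        have "int p ^ Suc N dvd b" unfolding M_def using 1 by (intro multiplicity_dvd') (simp add: M_def)
        then have "int p ^ Suc N dvd ((a - 1) + b) - b" using h1 by (intro dvd_diff[OF h1])
        then show False using na by simp
      next
        case 2
        have "int p ^ M dvd a - 1" using 2 by (intro multiplicity_dvd') (simp add: N_def)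
        then have h1: "int p ^ Suc M dvd (a - 1) + b" using keyA[OF M1 _ dbM] by blast
        have "int p ^ Suc M dvd a - 1" using 2 by (intro multiplicity_dvd') (simp add: N_def)
        then have "int p ^ Suc M dvd ((a - 1) + b) - (a - 1)" using h1 by (intro dvd_diff[OF h1])
        moreover have "((a - 1) + b) - (a - 1) = b" by simp
        ultimately show False using nb by metis
      qed
    qed
    have kM: "int p ^ Suc M dvd V \<and> (int p ^ Suc (Suc M) dvd V \<longrightarrow> int p ^ Suc M dvd b)"
      using keyA[OF M1 _ dbM] daN NM by blast
    have "multiplicity (int p) V = Suc M" using kM nb by (intro multiplicity_eqI) auto
    then show ?thesis using NM True xV unfolding N_def M_def by simp
  qed
  have partB: "(int p dvd a \<longrightarrow> multiplicity (int p) (x - 2) = multiplicity (int p) a + 1)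
     \<and> (\<not> int p dvd a \<longrightarrow> \<not> int p dvd (x - 2))"
  proof (cases "int p dvd a")
    case False
    then show ?thesis using UmodD xU by simp
  next
    case True
    have nb: "\<not> int p dvd b"
    proof
      assume "int p dvd b"
      then have "int p dvd a - 1" using bA by blast
      then have "int p dvd a - (a - 1)" by (rule dvd_diff[OF True])
      then show False using pnu by simp
    qed
    define v where "v = multiplicity (int p) a"
    have v1: "v \<ge> 1" unfolding v_def using multiplicity_geI[OF a0 pnu, of 1] True by simp
    have nav: "\<not> int p ^ Suc v dvd a" unfolding v_def using nmul a0 by blast
    obtain a' where a': "a = int p ^ v * a'" using multiplicity_dvd[of "int p" a] unfolding v_def[symmetric] by (elim dvdE)
    have Ae: "A = of_int b * s2 + of_nat p ^ v * of_int a'" unfolding A_def a' by (simp add: algebra_simps)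
    obtain z where zZ: "z \<in> Z2" and z: "(of_int b * s2 + of_nat p ^ v * of_int a') ^ p = (of_int b * s2) ^ p
        + of_nat p * (of_int b * s2) ^ (p - 1) * (of_nat p ^ v * of_int a')
        + (of_nat p ^ v * of_int a') ^ p + of_nat p ^ (2 * v + 1) * z"
      using binom_split[OF pr, of "of_int b * s2" "of_int a'" v] unfolding s2_def by auto
    obtain z1 z2 where z12: "z = of_int z1 + of_int z2 * s2" using zZ unfolding s2_def by (auto elim: Z2E)
    define k where "k = v * p - (2 * v + 1)"
    have "v * p \<ge> v * 3" using p3 by simp
    then have "v * p \<ge> 2 * v + 1" using v1 by linarith
    then have mp: "v * p = (2 * v + 1) + k" unfolding k_def by simp
    have e1: "(of_int b * s2) ^ p = of_int (b ^ p * 2 ^ h) * s2" by (simp add: power_mult_distrib s2pow)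
    have e2: "of_nat p * (of_int b * s2) ^ (p - 1) * (of_nat p ^ v * of_int a') = of_int (int p * b ^ (p - 1) * 2 ^ h * a)"
      unfolding a' using s2pow1 by (simp add: power_mult_distrib del: One_nat_def)
    have e3: "(of_nat p ^ v * of_int a' :: real) ^ p = of_int (int p ^ (2 * v + 1)) * of_int (int p ^ k * a' ^ p)"
    proof -
      have "(of_nat p ^ v * of_int a') ^ p = (of_nat p :: real) ^ (v * p) * of_int a' ^ p" by (simp add: power_mult_distrib power_mult)
      then show ?thesis unfolding mp power_add by simp
    qed
    have "A ^ p = of_int (b ^ p * 2 ^ h) * s2 + of_int (int p * b ^ (p - 1) * 2 ^ h * a)
        + of_int (int p ^ (2 * v + 1)) * of_int (int p ^ k * a' ^ p)
        + of_int (int p ^ (2 * v + 1)) * (of_int z1 + of_int z2 * s2)"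
      unfolding Ae z e1 e2 e3 z12 by simp
    also have "\<dots> = of_int (int p * b ^ (p - 1) * 2 ^ h * a + int p ^ (2 * v + 1) * (int p ^ k * a' ^ p) + int p ^ (2 * v + 1) * z1)
       + of_int (b ^ p * 2 ^ h + int p ^ (2 * v + 1) * z2) * s2"
      by (rule lin_comb2)
    finally have "U = int p * b ^ (p - 1) * 2 ^ h * a + int p ^ (2 * v + 1) * (int p ^ k * a' ^ p) + int p ^ (2 * v + 1) * z1
       \<and> V = b ^ p * 2 ^ h + int p ^ (2 * v + 1) * z2"
      by (rule Z2_coeff'[OF UV _ s2_def])
    then have UB: "U = int p * (b ^ (p - 1) * 2 ^ h * a) + int p ^ (2 * v + 1) * (int p ^ k * a' ^ p + z1)"
      by (simp add: distrib_left mult.assoc)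
    have d2: "int p ^ Suc (Suc v) dvd int p ^ (2 * v + 1)" using v1 by (intro le_imp_power_dvd) simp
    then have d1: "int p ^ Suc v dvd int p ^ (2 * v + 1)" by (meson dvd_trans le_imp_power_dvd le_Suc_eq)
    have h1: "int p ^ Suc v dvd int p * (b ^ (p - 1) * 2 ^ h * a)" unfolding a' by simp
    have h2: "int p ^ Suc v dvd int p ^ (2 * v + 1) * (int p ^ k * a' ^ p + z1)" using d1 by (rule dvd_mult2)
    have c1: "int p ^ Suc v dvd U" unfolding UB by (rule dvd_add[OF h1 h2])
    have c2: "\<not> int p ^ Suc (Suc v) dvd U"
    proof
      assume "int p ^ Suc (Suc v) dvd U"
      then have "int p ^ Suc (Suc v) dvd U - int p ^ (2 * v + 1) * (int p ^ k * a' ^ p + z1)"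
        using dvd_diff[OF _ dvd_mult2[OF d2]] by blast
      then have "int p * int p ^ Suc v dvd int p * (b ^ (p - 1) * 2 ^ h * a)" unfolding UB by simp
      then have h1: "int p ^ Suc v dvd (b ^ (p - 1) * 2 ^ h) * a" using p0 by simp
      have "coprime (int p) b" by (rule prime_imp_coprime[OF pi nb])
      moreover have "coprime (int p) (2 ^ h)" by (rule prime_imp_coprime[OF pi p2dvd])
      ultimately have "coprime (int p ^ Suc v) (b ^ (p - 1) * 2 ^ h)"
        by (simp only: coprime_mult_right_iff coprime_power_left_iff coprime_power_right_iff simp_thms) blast
      then have "int p ^ Suc v dvd a" using h1 by (simp add: coprime_dvd_mult_right_iff)
      then show False using nav by blast
    qed
    have "multiplicity (int p) (x - 2) = Suc v" unfolding xU using c1 c2 by (intro multiplicity_eqI) auto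
    then show ?thesis using True unfolding v_def by simp
  qed
  have last1: "\<not> int p dvd (x - 1) \<or> (int p) ^ 2 dvd (x - 1)"
  proof (cases "int p dvd b")
    case True
    then have "multiplicity (int p) (x - 1) \<ge> 2" using partA multiplicity_geI[OF b0 pnu, of 1] by simp
    then show ?thesis using multiplicity_dvd' by blast
  next
    case False then show ?thesis using partA by blast
  qed
  have last2: "\<not> int p dvd (x - 2) \<or> (int p) ^ 2 dvd (x - 2)"
  proof (cases "int p dvd a")
    case True
    then have "multiplicity (int p) (x - 2) \<ge> 2" using partB multiplicity_geI[OF a0 pnu, of 1] by simp
    then show ?thesis using multiplicity_dvd' by blast
  next
    case False then show ?thesis using partB by blast
  qed
  show ?thesis using partA partB last1 last2 by blast
qed

end
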